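(* Let $\phi_+,\phi_-,\psi\ge0$ and let $\eta$ have the standard Cauchy distribution (i.e. density $f_1(x)=1/\{\pi(1+x^2)\}$). Then $E\log\{\phi_+(\eta^+)^2+\phi_-(\eta^-)^2+\psi\}=\log[(\sqrt{\phi_+}+\sqrt\psi)(\sqrt{\phi_-}+\sqrt\psi)]$.
   Context: $x^+=\max\{x,0\}$, $x^-=-\min\{x,0\}$. This quantity is the top Lyapunov exponent $\gamma_1$ of the sAGARCH(1,1) model $y_t=\sigma_t\eta_t$, $\sigma_t^2=\omega+\phi_+(y_{t-1}^+)^2+\phi_-(y_{t-1}^-)^2+\psi\sigma_{t-1}^2$ with stable exponent $\alpha=1$. *)

theory Defs
  imports "HOL-Probability.Probability"
begin

definition cauchy_density :: "real \<Rightarrow> real" where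
  "cauchy_density x = 1 / (pi * (1 + x\<^sup>2))"

text \<open>The law of a standard Cauchy variable eta, as a measure on the reals.\<close>
definition cauchy_measure :: "real measure" where
  "cauchy_measure = density lborel (\<lambda>x. ennreal (cauchy_density x))"

definition pos_part :: "real \<Rightarrow> real" where "pos_part x = max x 0"
definition neg_part :: "real \<Rightarrow> real" where "neg_part x = - min x 0"

end

theory Submission
  imports Defs
begin

lemma div_cancel_aux: "(u::real) \<noteq> 0 \<Longrightarrow> a/(p*u) * (u*y/w) = a*y/(p*w)"
  by (simp add: divide_simps)

lemma innerA:
  fixes t :: real assumes t: "0 < t" "t \<noteq> 1"
  shows "(\<integral>\<^sup>+x. ennreal (2*t*x\<^sup>2/(pi*(1+t\<^sup>2*x\<^sup>2)*(1+x\<^sup>2))) * indicator {0..} x \<partial>lborel) = ennreal (1/(1+t))"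
proof -
  define F where "F = (\<lambda>x::real. 2*t/(pi*(t\<^sup>2-1)) * (arctan x - arctan(t*x)/t))"
  have t2: "t\<^sup>2 - 1 \<noteq> 0" using t by (smt (verit) power2_eq_1_iff)
  have "(\<integral>\<^sup>+x. ennreal (2*t*x\<^sup>2/(pi*(1+t\<^sup>2*x\<^sup>2)*(1+x\<^sup>2))) * indicator {0..} x \<partial>lborel) = ennreal (1/(1+t) - F 0)"
  proof (rule nn_integral_FTC_atLeast)
    show "(\<lambda>x. 2*t*x\<^sup>2/(pi*(1+t\<^sup>2*x\<^sup>2)*(1+x\<^sup>2))) \<in> borel_measurable borel" by measurable
    fix x :: real assume "0 \<le> x"
    show "0 \<le> 2*t*x\<^sup>2/(pi*(1+t\<^sup>2*x\<^sup>2)*(1+x\<^sup>2))" using t by (simp add: pos_add_strict)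
    have p1: "1 + t\<^sup>2*x\<^sup>2 \<noteq> 0" by (smt (verit) zero_le_power2 mult_nonneg_nonneg)
    have p2: "1 + x\<^sup>2 \<noteq> 0" by (smt (verit) zero_le_power2)
    have "(F has_real_derivative 2*t/(pi*(t\<^sup>2-1)) * (inverse(1+x\<^sup>2) - inverse(1+(t*x)\<^sup>2))) (at x)"
      unfolding F_def using t t2 by (auto intro!: derivative_eq_intros)
    moreover have "2*t/(pi*(t\<^sup>2-1)) * (inverse(1+x\<^sup>2) - inverse(1+(t*x)\<^sup>2)) = 2*t*x\<^sup>2/(pi*(1+t\<^sup>2*x\<^sup>2)*(1+x\<^sup>2))"
    proof -
      have "inverse(1+x\<^sup>2) - inverse(1+(t*x)\<^sup>2) = (t\<^sup>2-1)*x\<^sup>2/((1+t\<^sup>2*x\<^sup>2)*(1+x\<^sup>2))"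
        using p1 p2 by (simp add: field_simps power_mult_distrib)
      then show ?thesis using div_cancel_aux[OF t2, of "2*t" pi] by (simp add: mult.assoc)
    qed
    ultimately show "(F has_real_derivative 2*t*x\<^sup>2/(pi*(1+t\<^sup>2*x\<^sup>2)*(1+x\<^sup>2))) (at x)" by simp
  next
    have lim2: "((\<lambda>x. arctan (t*x)) \<longlongrightarrow> pi/2) at_top"
      using t by (intro filterlim_compose[OF tendsto_arctan_at_top] filterlim_tendsto_pos_mult_at_top[OF tendsto_const]) (auto simp: filterlim_ident)
    have "(F \<longlongrightarrow> 2*t/(pi*(t\<^sup>2-1)) * (pi/2 - (pi/2)/t)) at_top"
      unfolding F_def by (intro tendsto_intros tendsto_arctan_at_top lim2) (use t in auto)
    moreover have "2*t/(pi*(t\<^sup>2-1)) * (pi/2 - (pi/2)/t) = 1/(1+t)"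
      using t t2 by (simp add: field_simps power2_eq_square)
    ultimately show "(F \<longlongrightarrow> 1/(1+t)) at_top" by simp
  qed
  also have "F 0 = 0" by (simp add: F_def)
  finally show ?thesis by simp
qed

lemma innerB:
  fixes t :: real assumes t: "0 < t" "t \<noteq> 1"
  shows "(\<integral>\<^sup>+x. ennreal (2*t/(pi*(x\<^sup>2+t\<^sup>2)*(1+x\<^sup>2))) * indicator {0..} x \<partial>lborel) = ennreal (1/(1+t))"
proof -
  define F where "F = (\<lambda>x::real. 2*t/(pi*(1-t\<^sup>2)) * (arctan ((1/t)*x)/t - arctan x))"
  have t2: "1 - t\<^sup>2 \<noteq> 0" using t by (smt (verit) power2_eq_1_iff)
  have "(\<integral>\<^sup>+x. ennreal (2*t/(pi*(x\<^sup>2+t\<^sup>2)*(1+x\<^sup>2))) * indicator {0..} x \<partial>lborel) = ennreal (1/(1+t) - F 0)"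
  proof (rule nn_integral_FTC_atLeast)
    show "(\<lambda>x. 2*t/(pi*(x\<^sup>2+t\<^sup>2)*(1+x\<^sup>2))) \<in> borel_measurable borel" by measurable
    fix x :: real assume "0 \<le> x"
    have p1: "x\<^sup>2 + t\<^sup>2 \<noteq> 0" using t by (smt (verit) zero_le_power2 zero_less_power)
    have p2: "1 + x\<^sup>2 \<noteq> 0" by (smt (verit) zero_le_power2)
    show "0 \<le> 2*t/(pi*(x\<^sup>2+t\<^sup>2)*(1+x\<^sup>2))" using t
      by (intro divide_nonneg_pos mult_pos_pos) (auto simp: add_nonneg_pos add_pos_nonneg)
    have "(F has_real_derivative 2*t/(pi*(1-t\<^sup>2)) * (inverse(1+((1/t)*x)\<^sup>2) * (1/t) / t - inverse(1+x\<^sup>2))) (at x)"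
      unfolding F_def using t t2 by (auto intro!: derivative_eq_intros)
    moreover have "2*t/(pi*(1-t\<^sup>2)) * (inverse(1+((1/t)*x)\<^sup>2) * (1/t) / t - inverse(1+x\<^sup>2)) = 2*t/(pi*(x\<^sup>2+t\<^sup>2)*(1+x\<^sup>2))"
    proof -
      have "inverse(1+((1/t)*x)\<^sup>2) * (1/t) / t - inverse(1+x\<^sup>2) = (1-t\<^sup>2)*1/((x\<^sup>2+t\<^sup>2)*(1+x\<^sup>2))"
      proof -
        have tt: "t\<^sup>2 \<noteq> 0" using t by simp
        have "1+((1/t)*x)\<^sup>2 = (x\<^sup>2+t\<^sup>2)/t\<^sup>2" using tt by (simp add: field_simps power_mult_distrib power_divide)
        then have "inverse(1+((1/t)*x)\<^sup>2) * (1/t) / t = 1/(x\<^sup>2+t\<^sup>2)"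
        proof -
          have "t*(t*t) + t*(x*x) = t*(x\<^sup>2+t\<^sup>2)" by (simp add: algebra_simps power2_eq_square)
          then have "t*(t*t) + t*(x*x) \<noteq> 0" using t p1 by simp
          then show ?thesis using tt \<open>1+((1/t)*x)\<^sup>2 = (x\<^sup>2+t\<^sup>2)/t\<^sup>2\<close> by (simp add: field_simps power2_eq_square)
        qed
        then show ?thesis using p1 p2 by (simp add: field_simps)
      qed
      moreover have "2*t/(pi*(1-t\<^sup>2)) * ((1-t\<^sup>2)*1/((x\<^sup>2+t\<^sup>2)*(1+x\<^sup>2))) = 2*t*1/(pi*((x\<^sup>2+t\<^sup>2)*(1+x\<^sup>2)))"
        by (rule div_cancel_aux[OF t2])
      ultimately show ?thesis by (simp add: mult.assoc)
    qed
    ultimately show "(F has_real_derivative 2*t/(pi*(x\<^sup>2+t\<^sup>2)*(1+x\<^sup>2))) (at x)" by simp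
  next
    have lim2: "((\<lambda>x. arctan ((1/t)*x)) \<longlongrightarrow> pi/2) at_top"
      using t by (intro filterlim_compose[OF tendsto_arctan_at_top] filterlim_tendsto_pos_mult_at_top[OF tendsto_const]) (auto simp: filterlim_ident)
    have "(F \<longlongrightarrow> 2*t/(pi*(1-t\<^sup>2)) * ((pi/2)/t - pi/2)) at_top"
      unfolding F_def by (intro tendsto_intros tendsto_arctan_at_top lim2) (use t in auto)
    moreover have "2*t/(pi*(1-t\<^sup>2)) * ((pi/2)/t - pi/2) = 1/(1+t)"
      using t t2 by (simp add: field_simps power2_eq_square)
    ultimately show "(F \<longlongrightarrow> 1/(1+t)) at_top" by simp
  qed
  also have "F 0 = 0" by (simp add: F_def)
  finally show ?thesis by simp
qed

lemma nn_FTC_Icc: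
  fixes f F :: "real \<Rightarrow> real"
  assumes "a \<le> b"
    and deriv: "\<And>x. a \<le> x \<Longrightarrow> x \<le> b \<Longrightarrow> DERIV F x :> f x"
    and cont: "\<And>x. a \<le> x \<Longrightarrow> x \<le> b \<Longrightarrow> isCont f x"
    and nn: "\<And>x. a \<le> x \<Longrightarrow> x \<le> b \<Longrightarrow> 0 \<le> f x"
  shows "(\<integral>\<^sup>+x. ennreal (f x * indicator {a..b} x) \<partial>lborel) = ennreal (F b - F a)"
proof -
  have h: "has_bochner_integral lborel (\<lambda>x. f x * indicator {a .. b} x) (F b - F a)"
    by (rule has_bochner_integral_FTC_Icc_real[OF assms(1) deriv cont])
  show ?thesis
    by (subst nn_integral_eq_integral)
       (use h nn in \<open>auto simp: has_bochner_integral_iff indicator_def intro!: AE_I2\<close>)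
qed

lemma nnA:
  fixes c :: real assumes c: "0 \<le> c"
  shows "(\<integral>\<^sup>+x. ennreal (cauchy_density x * ln(1+c\<^sup>2*x\<^sup>2)) * indicator {0..} x \<partial>lborel) = ennreal (ln(1+c))"
proof -
  define k where "k = (\<lambda>t x::real. ennreal (2*t*x\<^sup>2/(pi*(1+t\<^sup>2*x\<^sup>2)*(1+x\<^sup>2)) * indicator {0..c} t * indicator {0..} x))"
  have pw: "ennreal (cauchy_density x * ln(1+c\<^sup>2*x\<^sup>2)) * indicator {0..} x = (\<integral>\<^sup>+t. k t x \<partial>lborel)" for x
  proof (cases "0 \<le> x")
    case False then show ?thesis by (simp add: k_def)
  next
    case True
    have pos: "\<And>t. 0 < 1+t\<^sup>2*x\<^sup>2" by (simp add: add_pos_nonneg)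
    have px: "0 < 1+x\<^sup>2" by (simp add: add_pos_nonneg)
    have I: "(\<integral>\<^sup>+t. ennreal (2*t*x\<^sup>2/(1+t\<^sup>2*x\<^sup>2) * indicator {0..c} t) \<partial>lborel) = ennreal (ln(1+c\<^sup>2*x\<^sup>2) - ln(1+0\<^sup>2*x\<^sup>2))"
    proof (rule nn_FTC_Icc[where F="\<lambda>t. ln(1+t\<^sup>2*x\<^sup>2)"])
      fix t :: real assume t: "0 \<le> t" "t \<le> c"
      show "((\<lambda>t. ln(1+t\<^sup>2*x\<^sup>2)) has_real_derivative 2*t*x\<^sup>2/(1+t\<^sup>2*x\<^sup>2)) (at t)"
        using pos[of t] by (auto intro!: derivative_eq_intros simp: field_simps)
      show "isCont (\<lambda>t. 2*t*x\<^sup>2/(1+t\<^sup>2*x\<^sup>2)) t"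
        using pos by (auto intro!: continuous_intros simp: less_imp_neq[symmetric])
      show "0 \<le> 2*t*x\<^sup>2/(1+t\<^sup>2*x\<^sup>2)" using t pos[of t] by simp
    qed (use c in auto)
    have "(\<integral>\<^sup>+t. k t x \<partial>lborel) = (\<integral>\<^sup>+t. ennreal (cauchy_density x) * ennreal (2*t*x\<^sup>2/(1+t\<^sup>2*x\<^sup>2) * indicator {0..c} t) \<partial>lborel)"
    proof (rule nn_integral_cong)
      fix t :: real
      show "k t x = ennreal (cauchy_density x) * ennreal (2*t*x\<^sup>2/(1+t\<^sup>2*x\<^sup>2) * indicator {0..c} t)"
      proof (cases "0 \<le> t \<and> t \<le> c")
        case True2: True
        have "ennreal (cauchy_density x) * ennreal (2*t*x\<^sup>2/(1+t\<^sup>2*x\<^sup>2) * indicator {0..c} t)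
           = ennreal (cauchy_density x * (2*t*x\<^sup>2/(1+t\<^sup>2*x\<^sup>2)))"
          using True2 pos[of t] px by (subst ennreal_mult) (auto simp: cauchy_density_def)
        also have "cauchy_density x * (2*t*x\<^sup>2/(1+t\<^sup>2*x\<^sup>2)) = 2*t*x\<^sup>2/(pi*(1+t\<^sup>2*x\<^sup>2)*(1+x\<^sup>2))"
          by (simp add: cauchy_density_def field_simps)
        finally show ?thesis using True2 True by (simp add: k_def)
      qed (auto simp: k_def)
    qed
    also have "\<dots> = ennreal (cauchy_density x) * ennreal (ln(1+c\<^sup>2*x\<^sup>2))"
    proof -
      have I': "(\<integral>\<^sup>+t. ennreal (2*t*x\<^sup>2/(1+t\<^sup>2*x\<^sup>2) * indicator {0..c} t) \<partial>lborel) = ennreal (ln(1+c\<^sup>2*x\<^sup>2))"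
        using I by simp
      show ?thesis by (subst nn_integral_cmult) (simp, simp only: I')
    qed
    also have "\<dots> = ennreal (cauchy_density x * ln(1+c\<^sup>2*x\<^sup>2))"
      using px by (subst ennreal_mult) (auto simp: cauchy_density_def)
    finally show ?thesis using True by simp
  qed
  have "(\<integral>\<^sup>+x. ennreal (cauchy_density x * ln(1+c\<^sup>2*x\<^sup>2)) * indicator {0..} x \<partial>lborel)
      = (\<integral>\<^sup>+x. \<integral>\<^sup>+t. k t x \<partial>lborel \<partial>lborel)"
    by (intro nn_integral_cong pw)
  also have "\<dots> = (\<integral>\<^sup>+t. \<integral>\<^sup>+x. k t x \<partial>lborel \<partial>lborel)"
    by (rule lborel_pair.Fubini') (simp add: k_def case_prod_unfold)
  also have "\<dots> = (\<integral>\<^sup>+t. ennreal (1/(1+t) * indicator {0..c} t) \<partial>lborel)"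
  proof (rule nn_integral_cong_AE)
    have "AE t in lborel. t \<noteq> 0 \<and> t \<noteq> 1"
      using AE_lborel_singleton[of 0] AE_lborel_singleton[of 1] by eventually_elim auto
    then show "AE t in lborel. (\<integral>\<^sup>+x. k t x \<partial>lborel) = ennreal (1/(1+t) * indicator {0..c} t)"
    proof eventually_elim
      case (elim t)
      show ?case
      proof (cases "0 \<le> t \<and> t \<le> c")
        case True
        then have "(\<integral>\<^sup>+x. k t x \<partial>lborel) = (\<integral>\<^sup>+x. ennreal (2*t*x\<^sup>2/(pi*(1+t\<^sup>2*x\<^sup>2)*(1+x\<^sup>2))) * indicator {0..} x \<partial>lborel)"
          by (intro nn_integral_cong) (auto simp: k_def split: split_indicator)
        also have "\<dots> = ennreal (1/(1+t))" using elim True by (intro innerA) auto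
        finally show ?thesis using True by simp
      qed (auto simp: k_def)
    qed
  qed
  also have "\<dots> = ennreal (ln(1+c) - ln(1+0))"
  proof (rule nn_FTC_Icc)
    fix t :: real assume t: "0 \<le> t" "t \<le> c"
    show "((\<lambda>t. ln(1+t)) has_real_derivative 1/(1+t)) (at t)"
      using t by (auto intro!: derivative_eq_intros simp: field_simps)
    show "isCont (\<lambda>t. 1/(1+t)) t" using t by (auto intro!: continuous_intros)
    show "0 \<le> 1/(1+t)" using t by simp
  qed (use c in auto)
  finally show ?thesis by simp
qed

lemma nnB:
  shows "(\<integral>\<^sup>+x. ennreal (cauchy_density x * ln(1+1/x\<^sup>2)) * indicator {0<..} x \<partial>lborel) = ennreal (ln 2)"
proof -
  define k where "k = (\<lambda>t x::real. ennreal (2*t/(pi*(x\<^sup>2+t\<^sup>2)*(1+x\<^sup>2)) * indicator {0..1} t * indicator {0<..} x))"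
  have pw: "ennreal (cauchy_density x * ln(1+1/x\<^sup>2)) * indicator {0<..} x = (\<integral>\<^sup>+t. k t x \<partial>lborel)" for x
  proof (cases "0 < x")
    case False then show ?thesis by (simp add: k_def)
  next
    case True
    have pos: "\<And>t. 0 < x\<^sup>2+t\<^sup>2" using True by (simp add: add_pos_nonneg)
    have px: "0 < 1+x\<^sup>2" by (simp add: add_pos_nonneg)
    have I: "(\<integral>\<^sup>+t. ennreal (2*t/(x\<^sup>2+t\<^sup>2) * indicator {0..1} t) \<partial>lborel) = ennreal (ln(x\<^sup>2+1\<^sup>2) - ln(x\<^sup>2+0\<^sup>2))"
    proof (rule nn_FTC_Icc[where F="\<lambda>t. ln(x\<^sup>2+t\<^sup>2)"])
      fix t :: real assume t: "0 \<le> t" "t \<le> 1"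
      show "((\<lambda>t. ln(x\<^sup>2+t\<^sup>2)) has_real_derivative 2*t/(x\<^sup>2+t\<^sup>2)) (at t)"
        using pos[of t] by (auto intro!: derivative_eq_intros simp: field_simps)
      show "isCont (\<lambda>t. 2*t/(x\<^sup>2+t\<^sup>2)) t"
        using pos by (auto intro!: continuous_intros simp: less_imp_neq[symmetric])
      show "0 \<le> 2*t/(x\<^sup>2+t\<^sup>2)" using t pos[of t] by simp
    qed auto
    have lnq: "ln(x\<^sup>2+1\<^sup>2) - ln(x\<^sup>2+0\<^sup>2) = ln(1+1/x\<^sup>2)"
    proof -
      have "ln(x\<^sup>2+1\<^sup>2) - ln(x\<^sup>2+0\<^sup>2) = ln((x\<^sup>2+1)/x\<^sup>2)" using True
        by (subst ln_div) (auto simp: add_pos_nonneg, smt (verit) zero_le_power2)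
      also have "(x\<^sup>2+1)/x\<^sup>2 = 1+1/x\<^sup>2" using True by (simp add: field_simps)
      finally show ?thesis .
    qed
    have "(\<integral>\<^sup>+t. k t x \<partial>lborel) = (\<integral>\<^sup>+t. ennreal (cauchy_density x) * ennreal (2*t/(x\<^sup>2+t\<^sup>2) * indicator {0..1} t) \<partial>lborel)"
    proof (rule nn_integral_cong)
      fix t :: real
      show "k t x = ennreal (cauchy_density x) * ennreal (2*t/(x\<^sup>2+t\<^sup>2) * indicator {0..1} t)"
      proof (cases "0 \<le> t \<and> t \<le> 1")
        case True2: True
        have "ennreal (cauchy_density x) * ennreal (2*t/(x\<^sup>2+t\<^sup>2) * indicator {0..1} t)
           = ennreal (cauchy_density x * (2*t/(x\<^sup>2+t\<^sup>2)))"
          using True2 pos[of t] px by (subst ennreal_mult) (auto simp: cauchy_density_def)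
        also have "cauchy_density x * (2*t/(x\<^sup>2+t\<^sup>2)) = 2*t/(pi*(x\<^sup>2+t\<^sup>2)*(1+x\<^sup>2))"
          by (simp add: cauchy_density_def field_simps)
        finally show ?thesis using True2 True by (simp add: k_def)
      qed (auto simp: k_def)
    qed
    also have "\<dots> = ennreal (cauchy_density x) * ennreal (ln(1+1/x\<^sup>2))"
    proof -
      have I': "(\<integral>\<^sup>+t. ennreal (2*t/(x\<^sup>2+t\<^sup>2) * indicator {0..1} t) \<partial>lborel) = ennreal (ln(1+1/x\<^sup>2))"
        using I lnq by simp
      show ?thesis by (subst nn_integral_cmult) (simp, simp only: I')
    qed
    also have "\<dots> = ennreal (cauchy_density x * ln(1+1/x\<^sup>2))"
      using px by (subst ennreal_mult) (auto simp: cauchy_density_def)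
    finally show ?thesis using True by simp
  qed
  have "(\<integral>\<^sup>+x. ennreal (cauchy_density x * ln(1+1/x\<^sup>2)) * indicator {0<..} x \<partial>lborel)
      = (\<integral>\<^sup>+x. \<integral>\<^sup>+t. k t x \<partial>lborel \<partial>lborel)"
    by (intro nn_integral_cong pw)
  also have "\<dots> = (\<integral>\<^sup>+t. \<integral>\<^sup>+x. k t x \<partial>lborel \<partial>lborel)"
    by (rule lborel_pair.Fubini') (simp add: k_def case_prod_unfold)
  also have "\<dots> = (\<integral>\<^sup>+t. ennreal (1/(1+t) * indicator {0..1} t) \<partial>lborel)"
  proof (rule nn_integral_cong_AE)
    have "AE t in lborel. t \<noteq> 0 \<and> t \<noteq> 1"
      using AE_lborel_singleton[of 0] AE_lborel_singleton[of 1] by eventually_elim auto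
    then show "AE t in lborel. (\<integral>\<^sup>+x. k t x \<partial>lborel) = ennreal (1/(1+t) * indicator {0..1} t)"
    proof eventually_elim
      case (elim t)
      show ?case
      proof (cases "0 \<le> t \<and> t \<le> 1")
        case True
        then have "(\<integral>\<^sup>+x. k t x \<partial>lborel) = (\<integral>\<^sup>+x. ennreal (2*t/(pi*(x\<^sup>2+t\<^sup>2)*(1+x\<^sup>2))) * indicator {0..} x \<partial>lborel)"
          by (intro nn_integral_cong_AE eventually_mono[OF AE_lborel_singleton[of 0]])
             (auto simp: k_def split: split_indicator)
        also have "\<dots> = ennreal (1/(1+t))" using elim True by (intro innerB) auto
        finally show ?thesis using True by simp
      qed (auto simp: k_def)
    qed
  qed
  also have "\<dots> = ennreal (ln(1+1) - ln(1+0))"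
  proof (rule nn_FTC_Icc)
    fix t :: real assume t: "0 \<le> t" "t \<le> 1"
    show "((\<lambda>t. ln(1+t)) has_real_derivative 1/(1+t)) (at t)"
      using t by (auto intro!: derivative_eq_intros simp: field_simps)
    show "isCont (\<lambda>t. 1/(1+t)) t" using t by (auto intro!: continuous_intros)
    show "0 \<le> 1/(1+t)" using t by simp
  qed auto
  finally show ?thesis by simp
qed

lemma cd_meas[measurable]: "cauchy_density \<in> borel_measurable borel"
  unfolding cauchy_density_def by measurable

lemma cd_pos: "0 < cauchy_density x"
  unfolding cauchy_density_def by (simp add: add_pos_nonneg)

lemma cd_minus[simp]: "cauchy_density (-x) = cauchy_density x"
  unfolding cauchy_density_def by simp

lemma nn0: "(\<integral>\<^sup>+x. ennreal (cauchy_density x) * indicator {0..} x \<partial>lborel) = ennreal (1/2)"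
proof -
  have "(\<integral>\<^sup>+x. ennreal (cauchy_density x) * indicator {0..} x \<partial>lborel) = ennreal (1/2 - arctan 0 / pi)"
  proof (rule nn_integral_FTC_atLeast)
    fix x :: real
    show "((\<lambda>x. arctan x / pi) has_real_derivative cauchy_density x) (at x)"
    proof -
      have "((\<lambda>x. arctan x / pi) has_real_derivative inverse (1 + x\<^sup>2) / pi) (at x)"
        by (auto intro!: derivative_eq_intros)
      moreover have "inverse (1 + x\<^sup>2) / pi = cauchy_density x"
        by (simp add: cauchy_density_def divide_inverse mult.commute)
      ultimately show ?thesis by simp
    qed
    show "0 \<le> cauchy_density x" using cd_pos[of x] by simp
  next
    have "((\<lambda>x. arctan x / pi) \<longlongrightarrow> (pi/2)/pi) at_top"
      by (intro tendsto_intros tendsto_arctan_at_top) simp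
    then show "((\<lambda>x. arctan x / pi) \<longlongrightarrow> 1/2) at_top" by simp
  qed simp
  then show ?thesis by simp
qed

lemma to_bochner:
  fixes f :: "real \<Rightarrow> real"
  assumes [measurable]: "f \<in> borel_measurable borel" and nn: "\<And>x. 0 < x \<Longrightarrow> 0 \<le> f x"
    and I: "(\<integral>\<^sup>+x. ennreal (f x) * indicator A x \<partial>lborel) = ennreal r" and r: "0 \<le> r"
    and A: "A = {0..} \<or> A = {0<..}"
  shows "has_bochner_integral lborel (\<lambda>x. indicator {0<..} x * f x) r"
proof (rule has_bochner_integral_nn_integral)
  show "(\<lambda>x. indicator {0<..} x * f x) \<in> borel_measurable lborel" by measurable
  show "AE x in lborel. 0 \<le> indicator {0<..} x * f x" by (auto intro!: AE_I2 nn simp: indicator_def)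
  show "(\<integral>\<^sup>+x. ennreal (indicator {0<..} x * f x) \<partial>lborel) = ennreal r"
    unfolding I[symmetric]
    by (intro nn_integral_cong_AE eventually_mono[OF AE_lborel_singleton[of 0]])
       (use A in \<open>auto split: split_indicator\<close>)
qed (use r in auto)

lemma HB0: "has_bochner_integral lborel (\<lambda>x. indicator {0<..} x * cauchy_density x) (1/2)"
  by (rule to_bochner[OF _ _ nn0]) (auto simp: less_imp_le[OF cd_pos])

lemma HBA: "0 \<le> c \<Longrightarrow> has_bochner_integral lborel (\<lambda>x. indicator {0<..} x * (cauchy_density x * ln(1+c\<^sup>2*x\<^sup>2))) (ln(1+c))"
  by (rule to_bochner[OF _ _ nnA]) (auto simp: less_imp_le[OF cd_pos])

lemma HBB: "has_bochner_integral lborel (\<lambda>x. indicator {0<..} x * (cauchy_density x * ln(1+1/x\<^sup>2))) (ln 2)"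
  by (rule to_bochner[OF _ _ nnB]) (auto simp: less_imp_le[OF cd_pos] add_pos_nonneg)

lemma reflect:
  fixes f :: "real \<Rightarrow> real"
  assumes [measurable]: "f \<in> borel_measurable borel" and h: "has_bochner_integral lborel (\<lambda>x. f (-x)) r"
  shows "has_bochner_integral lborel f r"
proof -
  have "has_bochner_integral (distr lborel borel uminus) f r"
    by (rule has_bochner_integral_distr) (use h in auto)
  then show ?thesis by (simp add: lborel_distr_uminus)
qed

lemma half:
  fixes p q :: real
  assumes p: "0 \<le> p" and q: "0 \<le> q" and pq: "0 < sqrt p + sqrt q"
  shows "has_bochner_integral lborel (\<lambda>x. indicator {0<..} x * (cauchy_density x * ln(p*x\<^sup>2+q))) (ln(sqrt p + sqrt q))"
proof (cases "q > 0")
  case True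
  define c where "c = sqrt p / sqrt q"
  have c0: "0 \<le> c" unfolding c_def using p q by simp
  have h: "has_bochner_integral lborel (\<lambda>x. ln q * (indicator {0<..} x * cauchy_density x) + indicator {0<..} x * (cauchy_density x * ln(1+c\<^sup>2*x\<^sup>2))) (ln q * (1/2) + ln(1+c))"
    by (intro has_bochner_integral_add has_bochner_integral_mult_right HB0 HBA c0)
  show ?thesis
  proof (rule has_bochner_integral_cong[THEN iffD1, OF refl _ _ h])
    have c2: "c\<^sup>2 = p/q" unfolding c_def using p q by (simp add: power_divide)
    fix x :: real
    have "ln q + ln(1+c\<^sup>2*x\<^sup>2) = ln(p*x\<^sup>2+q)"
    proof -
      have "0 < 1+c\<^sup>2*x\<^sup>2" by (simp add: add_pos_nonneg)
      have "ln q + ln(1+c\<^sup>2*x\<^sup>2) = ln (q*(1+c\<^sup>2*x\<^sup>2))"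
        using True \<open>0 < 1+c\<^sup>2*x\<^sup>2\<close> by (subst ln_mult) auto
      also have "q*(1+c\<^sup>2*x\<^sup>2) = p*x\<^sup>2+q" using True by (simp add: c2 field_simps)
      finally show ?thesis .
    qed
    then have e: "ln(p*x\<^sup>2+q) = ln q + ln(1+c\<^sup>2*x\<^sup>2)" by simp
    show "ln q * (indicator {0<..} x * cauchy_density x) + indicator {0<..} x * (cauchy_density x * ln(1+c\<^sup>2*x\<^sup>2))
      = indicator {0<..} x * (cauchy_density x * ln(p*x\<^sup>2+q))"
      by (simp only: e) (simp add: algebra_simps)
  next
    have sq: "0 < sqrt q" using True by simp
    have "ln q = 2 * ln (sqrt q)" using True by (simp add: ln_sqrt)
    moreover have "ln(1+c) = ln(sqrt p + sqrt q) - ln(sqrt q)"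
    proof -
      have "1 + c = (sqrt p + sqrt q) / sqrt q" using sq unfolding c_def by (simp add: field_simps)
      then show ?thesis using sq pq by (simp add: ln_div)
    qed
    ultimately show "ln q * (1/2) + ln(1+c) = ln(sqrt p + sqrt q)" by simp
  qed
next
  case False
  then have q0: "q = 0" using q by simp
  then have pp: "0 < p" using pq p by auto
  have h: "has_bochner_integral lborel (\<lambda>x. ln p * (indicator {0<..} x * cauchy_density x) + indicator {0<..} x * (cauchy_density x * ln(1+1\<^sup>2*x\<^sup>2)) - indicator {0<..} x * (cauchy_density x * ln(1+1/x\<^sup>2))) (ln p * (1/2) + ln(1+1) - ln 2)"
    by (intro has_bochner_integral_diff has_bochner_integral_add has_bochner_integral_mult_right HB0 HBA HBB) simp
  show ?thesis
  proof (rule has_bochner_integral_cong[THEN iffD1, OF refl _ _ h])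
    fix x :: real
    show "ln p * (indicator {0<..} x * cauchy_density x) + indicator {0<..} x * (cauchy_density x * ln(1+1\<^sup>2*x\<^sup>2)) - indicator {0<..} x * (cauchy_density x * ln(1+1/x\<^sup>2))
      = indicator {0<..} x * (cauchy_density x * ln(p*x\<^sup>2+q))"
    proof (cases "0 < x")
      case True
      have x2: "0 < x\<^sup>2" using True by simp
      have "ln(1+x\<^sup>2) - ln(1+1/x\<^sup>2) = ln ((1+x\<^sup>2)/(1+1/x\<^sup>2))"
        using x2 by (intro ln_divide_pos[symmetric] add_pos_nonneg) auto
      also have "(1+x\<^sup>2)/(1+1/x\<^sup>2) = x\<^sup>2"
      proof -
        have d: "1+1/x\<^sup>2 = (1+x\<^sup>2)/x\<^sup>2" using x2 by (simp add: field_simps)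
        have n: "1+x\<^sup>2 \<noteq> 0" using add_pos_nonneg[of 1 "x\<^sup>2"] by simp
        show ?thesis using d x2 n by simp
      qed
      finally have e1: "ln(1+x\<^sup>2) - ln(1+1/x\<^sup>2) = ln (x\<^sup>2)" .
      have e2: "ln (p*x\<^sup>2) = ln p + ln (x\<^sup>2)" using pp x2 by (simp add: ln_mult)
      have e: "ln (p*x\<^sup>2+q) = ln p + ln(1+x\<^sup>2) - ln(1+1/x\<^sup>2)" using e1 e2 q0 by simp
      show ?thesis by (simp only: e) (simp add: algebra_simps)
    qed simp
  next
    show "ln p * (1/2) + ln(1+1) - ln 2 = ln(sqrt p + sqrt q)"
      using pp q0 by (simp add: ln_sqrt)
  qed
qed

lemma HB0neg: "has_bochner_integral lborel (\<lambda>x. indicator {..<0} x * cauchy_density x) (1/2)"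
  by (rule reflect) (use HB0 in \<open>auto simp: indicator_def\<close>)

lemma Dzero: fixes c :: real shows "has_bochner_integral lborel (\<lambda>x. indicator {0::real} x * c) 0"
proof -
  have "has_bochner_integral lborel (indicator {0::real}) (measure lborel {0::real})"
    by (rule has_bochner_integral_real_indicator) auto
  then have "has_bochner_integral lborel (\<lambda>x. indicator {0::real} x * c) (measure lborel {0::real} * c)"
    by (rule has_bochner_integral_mult_left)
  then show ?thesis by simp
qed

lemma HBtotal: "has_bochner_integral lborel cauchy_density 1"
proof -
  have h: "has_bochner_integral lborel (\<lambda>x. indicator {0<..} x * cauchy_density x + indicator {..<0} x * cauchy_density x + indicator {0::real} x * cauchy_density 0) (1/2 + 1/2 + 0)"
    by (intro has_bochner_integral_add HB0 HB0neg Dzero)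
  show ?thesis
    by (rule has_bochner_integral_cong[THEN iffD1, OF refl _ _ h]) (auto simp: indicator_def)
qed

theorem mainTheorem8:
  fixes phip phim psi :: real
  assumes "phip \<ge> 0" and "phim \<ge> 0" and "psi \<ge> 0"
  defines "g \<equiv> (\<lambda>x. phip * (pos_part x)\<^sup>2 + phim * (neg_part x)\<^sup>2 + psi)"
      and "R \<equiv> (sqrt phip + sqrt psi) * (sqrt phim + sqrt psi)"
  shows "(R > 0 \<longrightarrow>
            integrable cauchy_measure (\<lambda>x. ln (g x)) \<and>
            (\<integral>x. ln (g x) \<partial>cauchy_measure) = ln R)
       \<and> (R = 0 \<longrightarrow> measure cauchy_measure {x. g x = 0} > 0)"
proof -
  have gmeas[measurable]: "g \<in> borel_measurable borel"
    unfolding g_def pos_part_def neg_part_def by measurable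
  have gpos: "\<And>x. x > 0 \<Longrightarrow> g x = phip*x\<^sup>2+psi" and gneg: "\<And>x. x < 0 \<Longrightarrow> g x = phim*x\<^sup>2+psi"
    and g0: "g 0 = psi"
    by (auto simp: g_def pos_part_def neg_part_def)
  have part1: "integrable cauchy_measure (\<lambda>x. ln (g x)) \<and> (\<integral>x. ln (g x) \<partial>cauchy_measure) = ln R" if R: "R > 0"
  proof -
    have A: "0 < sqrt phip + sqrt psi" and B: "0 < sqrt phim + sqrt psi"
      using R unfolding R_def by (smt (verit) assms mult_nonneg_nonneg real_sqrt_ge_zero mult_eq_0_iff)+
    have hp: "has_bochner_integral lborel (\<lambda>x. indicator {0<..} x * (cauchy_density x * ln(phip*x\<^sup>2+psi))) (ln(sqrt phip + sqrt psi))"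
      by (rule half) (use assms A in auto)
    have hm0: "has_bochner_integral lborel (\<lambda>x. indicator {0<..} x * (cauchy_density x * ln(phim*x\<^sup>2+psi))) (ln(sqrt phim + sqrt psi))"
      by (rule half) (use assms B in auto)
    have hm: "has_bochner_integral lborel (\<lambda>x. indicator {..<0} x * (cauchy_density x * ln(phim*x\<^sup>2+psi))) (ln(sqrt phim + sqrt psi))"
      by (rule reflect) (use hm0 in \<open>auto simp: indicator_def\<close>)
    have h: "has_bochner_integral lborel (\<lambda>x. indicator {0<..} x * (cauchy_density x * ln(phip*x\<^sup>2+psi)) + indicator {..<0} x * (cauchy_density x * ln(phim*x\<^sup>2+psi)) + indicator {0::real} x * (cauchy_density 0 * ln psi))
       (ln(sqrt phip + sqrt psi) + ln(sqrt phim + sqrt psi) + 0)"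
      by (intro has_bochner_integral_add hp hm Dzero)
    have h2: "has_bochner_integral lborel (\<lambda>x. cauchy_density x *\<^sub>R ln (g x)) (ln R)"
    proof (rule has_bochner_integral_cong[THEN iffD1, OF refl _ _ h])
      fix x :: real
      show "indicator {0<..} x * (cauchy_density x * ln(phip*x\<^sup>2+psi)) + indicator {..<0} x * (cauchy_density x * ln(phim*x\<^sup>2+psi)) + indicator {0::real} x * (cauchy_density 0 * ln psi)
        = cauchy_density x *\<^sub>R ln (g x)"
        by (cases x "0::real" rule: linorder_cases) (auto simp: gpos gneg g0 indicator_def)
    next
      show "ln(sqrt phip + sqrt psi) + ln(sqrt phim + sqrt psi) + 0 = ln R"
        unfolding R_def using A B by (simp add: ln_mult)
    qed
    have "has_bochner_integral cauchy_measure (\<lambda>x. ln (g x)) (ln R)"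
      unfolding cauchy_measure_def
      by (rule has_bochner_integral_density) (use h2 cd_pos in \<open>auto intro!: AE_I2 less_imp_le\<close>)
    then show ?thesis by (simp add: has_bochner_integral_iff)
  qed
  have part2: "measure cauchy_measure {x. g x = 0} > 0" if R: "R = 0"
  proof -
    have ps: "psi = 0" and pp: "phip = 0 \<or> phim = 0"
      using R assms unfolding R_def by (auto simp: add_nonneg_eq_0_iff)
    define T where "T = (if phip = 0 then {0<..} else {..<0::real})"
    have TS: "T \<subseteq> {x. g x = 0}" using ps pp by (auto simp: T_def gpos gneg)
    have T[measurable]: "T \<in> sets borel" by (simp add: T_def)
    have S[measurable]: "{x. g x = 0} \<in> sets borel" by measurable
    have hT: "has_bochner_integral lborel (\<lambda>x. indicator T x * cauchy_density x) (1/2)"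
      using HB0 HB0neg by (simp add: T_def)
    have eT: "emeasure cauchy_measure T = ennreal (1/2)"
    proof -
      have "emeasure cauchy_measure T = (\<integral>\<^sup>+x. ennreal (cauchy_density x) * indicator T x \<partial>lborel)"
        unfolding cauchy_measure_def by (rule emeasure_density) auto
      also have "\<dots> = (\<integral>\<^sup>+x. ennreal (indicator T x * cauchy_density x) \<partial>lborel)"
        by (intro nn_integral_cong) (auto simp: indicator_def)
      also have "\<dots> = ennreal (\<integral>x. indicator T x * cauchy_density x \<partial>lborel)"
        using hT by (intro nn_integral_eq_integral) (auto simp: has_bochner_integral_iff indicator_def less_imp_le[OF cd_pos] intro!: AE_I2)
      also have "\<dots> = ennreal (1/2)"
        by (simp only: has_bochner_integral_integral_eq[OF hT])
      finally show ?thesis .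
    qed
    have eU: "emeasure cauchy_measure {x. g x = 0} \<le> ennreal 1"
    proof -
      have "emeasure cauchy_measure {x. g x = 0} \<le> emeasure cauchy_measure UNIV"
        by (rule emeasure_mono) (auto simp: cauchy_measure_def)
      also have "\<dots> = (\<integral>\<^sup>+x. ennreal (cauchy_density x) * indicator UNIV x \<partial>lborel)"
        unfolding cauchy_measure_def by (rule emeasure_density) auto
      also have "\<dots> = (\<integral>\<^sup>+x. ennreal (cauchy_density x) \<partial>lborel)" by simp
      also have "\<dots> = ennreal 1"
        using HBtotal by (subst nn_integral_eq_integral) (auto simp: has_bochner_integral_iff less_imp_le[OF cd_pos] intro!: AE_I2)
      finally show ?thesis .
    qed
    have eL: "ennreal (1/2) \<le> emeasure cauchy_measure {x. g x = 0}"
      unfolding eT[symmetric] by (rule emeasure_mono[OF TS]) (auto simp: cauchy_measure_def)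
    have "enn2real (ennreal (1/2)) \<le> enn2real (emeasure cauchy_measure {x. g x = 0})"
      by (rule enn2real_mono[OF eL]) (use eU in \<open>auto simp: top_unique intro: le_less_trans\<close>)
    then have "1/2 \<le> enn2real (emeasure cauchy_measure {x. g x = 0})"
      by (subst (asm) enn2real_ennreal) auto
    then show ?thesis unfolding measure_def by linarith
  qed
  show ?thesis using part1 part2 by blast
qed

end
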